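(* Let $Q$ be a finite boolean combination (finite unions, intersections and complements) of principal quantifiers of the form $Q_A$ with $A\subseteq\mathbb{N}^d$ for a fixed $d$. Then for every $a\in(\mathbb{N}^d)^{<\omega}$ the orbit $\{g(a):g\in\mathrm{Aut}(Q)\}$ is definable in $\mathscr{L}_{\omega_1\omega}(Q)$.
   Context: For $A\subseteq\mathbb{N}^d$, the principal quantifier $Q_A=\{X\subseteq\mathbb{N}^d:A\subseteq X\}$ is a quantifier of type $\langle d\rangle$ on $\mathbb{N}$ (a family of subsets of $\mathbb{N}^d$). A permutation $g$ of $\mathbb{N}$ acts coordinatewise on tuples and on subsets by $g(X)=\{g(x):x\in X\}$; $g$ fixes $Q$ if $X\in Q\iff g(X)\in Q$ for all $X\subseteq\mathbb{N}^d$, and $\mathrm{Aut}(Q)$ is the group of such permutations. $\mathscr{L}_{\omega_1\omega}(Q)$ extends $\mathscr{L}_{\omega_1\omega}$ (countable conjunctions/disjunctions, finite quantifier strings) by formulas $Qx\,\varphi(x,y)$ ($x$ a $d$-tuple of variables) with $\mathbb{N}\models Qx\,\varphi(x,b)$ iff $\{a\in\mathbb{N}^d:\mathbb{N}\models\varphi(a,b)\}\in Q$. A set $B$ of tuples is definable in $\mathscr{L}_{\omega_1\omega}(Q)$ if there is a formula without parameters whose only non-logical symbol is $Q$ that defines $B$ in $\mathbb{N}$. *)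

theory Defs
  imports Main
begin

definition tuples :: "nat \<Rightarrow> nat list set" where
  "tuples d = {a. length a = d}"

definition principal :: "nat \<Rightarrow> nat list set \<Rightarrow> nat list set set" where
  "principal d A = {X. X \<subseteq> tuples d \<and> A \<subseteq> X}"

inductive_set boolcomb :: "nat \<Rightarrow> nat list set set set" for d where
  prin: "A \<subseteq> tuples d \<Longrightarrow> principal d A \<in> boolcomb d"
| union: "Q1 \<in> boolcomb d \<Longrightarrow> Q2 \<in> boolcomb d \<Longrightarrow> Q1 \<union> Q2 \<in> boolcomb d"
| inter: "Q1 \<in> boolcomb d \<Longrightarrow> Q2 \<in> boolcomb d \<Longrightarrow> Q1 \<inter> Q2 \<in> boolcomb d"
| compl: "Q1 \<in> boolcomb d \<Longrightarrow> Pow (tuples d) - Q1 \<in> boolcomb d"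

definition Aut :: "nat \<Rightarrow> nat list set set \<Rightarrow> (nat \<Rightarrow> nat) set" where
  "Aut d Q = {g. bij g \<and> (\<forall>X. X \<subseteq> tuples d \<longrightarrow> (X \<in> Q \<longleftrightarrow> (map g) ` X \<in> Q))}"

text \<open>Formulas of L_{omega_1 omega}(Q), pure equality language plus Q.
  Variables are natural numbers; Conj is a countable conjunction.\<close>
datatype form =
    Eq nat nat
  | Neg form
  | Conj "nat \<Rightarrow> form"
  | Ex nat form
  | Qf "nat list" form

definition upds :: "(nat \<Rightarrow> nat) \<Rightarrow> nat list \<Rightarrow> nat list \<Rightarrow> (nat \<Rightarrow> nat)" where
  "upds \<sigma> xs a = fold (\<lambda>(x, v) s. s(x := v)) (zip xs a) \<sigma>"

primrec sat :: "nat \<Rightarrow> nat list set set \<Rightarrow> form \<Rightarrow> (nat \<Rightarrow> nat) \<Rightarrow> bool" where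
  "sat d Q (Eq x y) \<sigma> = (\<sigma> x = \<sigma> y)"
| "sat d Q (Neg \<phi>) \<sigma> = (\<not> sat d Q \<phi> \<sigma>)"
| "sat d Q (Conj f) \<sigma> = (\<forall>i. sat d Q (f i) \<sigma>)"
| "sat d Q (Ex x \<phi>) \<sigma> = (\<exists>v. sat d Q \<phi> (\<sigma>(x := v)))"
| "sat d Q (Qf xs \<phi>) \<sigma> =
     (length xs = d \<and> {a \<in> tuples d. sat d Q \<phi> (upds \<sigma> xs a)} \<in> Q)"

primrec fv :: "form \<Rightarrow> nat set" where
  "fv (Eq x y) = {x, y}"
| "fv (Neg \<phi>) = fv \<phi>"
| "fv (Conj f) = (\<Union>i. fv (f i))"
| "fv (Ex x \<phi>) = fv \<phi> - {x}"
| "fv (Qf xs \<phi>) = fv \<phi> - set xs"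

definition definable :: "nat \<Rightarrow> nat list set set \<Rightarrow> nat \<Rightarrow> nat list set \<Rightarrow> bool" where
  "definable d Q k B \<longleftrightarrow> B \<subseteq> tuples k \<and>
     (\<exists>\<phi>. fv \<phi> \<subseteq> {..<k} \<and> (\<forall>\<sigma>. sat d Q \<phi> \<sigma> \<longleftrightarrow> map \<sigma> [0..<k] \<in> B))"

text \<open>Orbit of a finite sequence a of d-tuples under Aut(Q), with each element
  flattened to a tuple of length (length a) * d.\<close>
definition orbit :: "nat \<Rightarrow> nat list set set \<Rightarrow> nat list list \<Rightarrow> nat list list set" where
  "orbit d Q a = {map (map g) a | g. g \<in> Aut d Q}"

end

theory Submission
  imports Defs "HOL-Library.Countable"
begin



lemma upds_Cons[simp]: "upds \<sigma> (x#xs) (v#a) = upds (\<sigma>(x:=v)) xs a"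
  by (simp add: upds_def)
lemma upds_Nil1[simp]: "upds \<sigma> [] a = \<sigma>" by (simp add: upds_def)
lemma upds_Nil2[simp]: "upds \<sigma> xs [] = \<sigma>" by (simp add: upds_def)

lemma upds_agree:
  "length a = length xs \<Longrightarrow> (x \<notin> set xs \<Longrightarrow> \<sigma> x = \<tau> x) \<Longrightarrow> upds \<sigma> xs a x = upds \<tau> xs a x"
proof (induction xs arbitrary: \<sigma> \<tau> a)
  case Nil then show ?case by simp
next
  case (Cons y xs)
  then obtain v a' where a: "a = v # a'" by (cases a) auto
  show ?case unfolding a upds_Cons
    by (rule Cons.IH) (use Cons.prems a in auto)
qed

lemma coinc: "(\<forall>x\<in>fv \<phi>. \<sigma> x = \<tau> x) \<Longrightarrow> sat d Q \<phi> \<sigma> = sat d Q \<phi> \<tau>"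
proof (induction \<phi> arbitrary: \<sigma> \<tau>)
  case (Ex x \<phi>)
  then show ?case by (auto intro!: ex_cong simp del: fun_upd_apply)
     (metis Diff_iff empty_iff fun_upd_apply insert_iff)+
next
  case (Qf xs \<phi>)
  have "{a \<in> tuples d. sat d Q \<phi> (upds \<sigma> xs a)} = {a \<in> tuples d. sat d Q \<phi> (upds \<tau> xs a)}"
    if "length xs = d"
  proof -
    { fix a assume "a \<in> tuples d"
      then have "length a = length xs" using that by (simp add: tuples_def)
      then have "sat d Q \<phi> (upds \<sigma> xs a) = sat d Q \<phi> (upds \<tau> xs a)"
        using Qf by (intro Qf.IH) (auto intro!: upds_agree) }
    then show ?thesis by auto
  qed
  then show ?case by auto
next
  case (Conj f)
  have "sat d Q (f i) \<sigma> = sat d Q (f i) \<tau>" for i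
    using Conj.IH[of "f i"] Conj.prems by auto
  then show ?case by simp
qed auto

lemma upds_comp: "upds (g \<circ> \<sigma>) xs (map g a) = g \<circ> upds \<sigma> xs a"
proof (induction xs arbitrary: \<sigma> a)
  case (Cons x xs)
  then show ?case
  proof (cases a)
    case (Cons v a')
    have eq: "(g \<circ> \<sigma>)(x := g v) = g \<circ> \<sigma>(x := v)" by auto
    have "upds (g \<circ> \<sigma>) (x#xs) (map g a) = upds ((g \<circ> \<sigma>)(x := g v)) xs (map g a')"
      using Cons by (simp only: list.map upds_Cons)
    also have "\<dots> = upds (g \<circ> \<sigma>(x := v)) xs (map g a')" by (simp only: eq)
    also have "\<dots> = g \<circ> upds (\<sigma>(x := v)) xs a'" by (rule Cons.IH)
    finally show ?thesis using Cons by (simp only: upds_Cons)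
  qed simp
qed simp

lemma sat_aut: "g \<in> Aut d Q \<Longrightarrow> sat d Q \<phi> (g \<circ> \<sigma>) = sat d Q \<phi> \<sigma>"
proof (induction \<phi> arbitrary: \<sigma>)
  case (Ex x \<phi>)
  have b: "bij g" using Ex.prems by (simp add: Aut_def)
  have eq: "(g \<circ> \<sigma>)(x := g w) = g \<circ> \<sigma>(x := w)" for w by auto
  have "(\<exists>v. sat d Q \<phi> ((g \<circ> \<sigma>)(x := v))) = (\<exists>w. sat d Q \<phi> ((g \<circ> \<sigma>)(x := g w)))"
    by (metis b bij_inv_eq_iff)
  also have "\<dots> = (\<exists>w. sat d Q \<phi> (\<sigma>(x := w)))" unfolding eq using Ex.IH Ex.prems by blast
  finally show ?case by (simp only: sat.simps)
next
  case (Qf xs \<phi>)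
  have b: "bij g" using Qf.prems by (simp add: Aut_def)
  let ?Sg = "{a \<in> tuples d. sat d Q \<phi> (upds (g \<circ> \<sigma>) xs a)}"
  let ?S = "{a \<in> tuples d. sat d Q \<phi> (upds \<sigma> xs a)}"
  have "?Sg = map g ` ?S"
  proof safe
    fix a assume a: "a \<in> tuples d" "sat d Q \<phi> (upds (g \<circ> \<sigma>) xs a)"
    have ma: "map g (map (inv g) a) = a" using b by (simp add: bij_is_surj surj_f_inv_f map_idI)
    have "sat d Q \<phi> (upds \<sigma> xs (map (inv g) a))"
      using a ma upds_comp[of g \<sigma> xs "map (inv g) a"] Qf by metis
    moreover have "map (inv g) a \<in> tuples d" using a by (simp add: tuples_def)
    ultimately show "a \<in> map g ` ?S" using ma by (metis (mono_tags, lifting) image_eqI mem_Collect_eq)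
  next
    fix a assume "a \<in> tuples d" "sat d Q \<phi> (upds \<sigma> xs a)"
    then show "map g a \<in> tuples d" "sat d Q \<phi> (upds (g \<circ> \<sigma>) xs (map g a))"
      using Qf.IH[OF Qf.prems, of "upds \<sigma> xs a"] upds_comp[of g \<sigma> xs a] by (auto simp: tuples_def comp_def)
  qed
  moreover have "?S \<subseteq> tuples d" by auto
  ultimately have "(?Sg \<in> Q) = (?S \<in> Q)" using Qf.prems by (auto simp: Aut_def)
  moreover have "sat d Q (Qf xs \<phi>) (g \<circ> \<sigma>) = (length xs = d \<and> ?Sg \<in> Q)" by (simp only: sat.simps)
  moreover have "sat d Q (Qf xs \<phi>) \<sigma> = (length xs = d \<and> ?S \<in> Q)" by (simp only: sat.simps)
  ultimately show ?case by blast
qed (auto simp: Aut_def bij_def inj_eq)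




lemma witness:
  assumes "Q \<in> boolcomb d" "X \<subseteq> tuples d"
  shows "\<exists>T0. finite T0 \<and> T0 \<subseteq> tuples d - X \<and>
    (\<forall>T. finite T \<longrightarrow> T0 \<subseteq> T \<longrightarrow> T \<subseteq> tuples d - X \<longrightarrow> (tuples d - T \<in> Q \<longleftrightarrow> X \<in> Q))"
  using assms(1)
proof induction
  case (prin A)
  show ?case
  proof (cases "A \<subseteq> X")
    case True
    show ?thesis
      by (rule exI[of _ "{}"]) (use True prin assms(2) in \<open>auto simp: principal_def\<close>)
  next
    case False
    then obtain t where t: "t \<in> A" "t \<notin> X" by auto
    show ?thesis
      by (rule exI[of _ "{t}"]) (use t prin assms(2) in \<open>auto simp: principal_def\<close>)
  qed
next
  case (union Q1 Q2)
  then obtain T1 T2 where "finite T1 \<and> T1 \<subseteq> tuples d - X \<and>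
    (\<forall>T. finite T \<longrightarrow> T1 \<subseteq> T \<longrightarrow> T \<subseteq> tuples d - X \<longrightarrow> (tuples d - T \<in> Q1 \<longleftrightarrow> X \<in> Q1))"
    "finite T2 \<and> T2 \<subseteq> tuples d - X \<and>
    (\<forall>T. finite T \<longrightarrow> T2 \<subseteq> T \<longrightarrow> T \<subseteq> tuples d - X \<longrightarrow> (tuples d - T \<in> Q2 \<longleftrightarrow> X \<in> Q2))"
    by blast
  then show ?case by (intro exI[of _ "T1 \<union> T2"]) auto
next
  case (inter Q1 Q2)
  then obtain T1 T2 where "finite T1 \<and> T1 \<subseteq> tuples d - X \<and>
    (\<forall>T. finite T \<longrightarrow> T1 \<subseteq> T \<longrightarrow> T \<subseteq> tuples d - X \<longrightarrow> (tuples d - T \<in> Q1 \<longleftrightarrow> X \<in> Q1))"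
    "finite T2 \<and> T2 \<subseteq> tuples d - X \<and>
    (\<forall>T. finite T \<longrightarrow> T2 \<subseteq> T \<longrightarrow> T \<subseteq> tuples d - X \<longrightarrow> (tuples d - T \<in> Q2 \<longleftrightarrow> X \<in> Q2))"
    by blast
  then show ?case by (intro exI[of _ "T1 \<union> T2"]) auto
next
  case (compl Q1)
  then obtain T1 where "finite T1 \<and> T1 \<subseteq> tuples d - X \<and>
    (\<forall>T. finite T \<longrightarrow> T1 \<subseteq> T \<longrightarrow> T \<subseteq> tuples d - X \<longrightarrow> (tuples d - T \<in> Q1 \<longleftrightarrow> X \<in> Q1))"
    by blast
  then show ?case using assms(2) by (intro exI[of _ "T1"]) auto
qed

lemma map_tuples: "map g ` tuples d \<subseteq> tuples d" by (auto simp: tuples_def)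

lemma aut_finite:
  assumes Q: "Q \<in> boolcomb d" and b: "bij g"
    and H: "\<forall>T. finite T \<longrightarrow> T \<subseteq> tuples d \<longrightarrow> (tuples d - T \<in> Q \<longleftrightarrow> tuples d - map g ` T \<in> Q)"
  shows "g \<in> Aut d Q"
  unfolding Aut_def
proof (intro CollectI conjI allI impI b)
  fix X assume X: "X \<subseteq> tuples d"
  have gi: "map g (map (inv g) t) = t" for t using b by (simp add: bij_is_surj surj_f_inv_f map_idI)
  have ig: "map (inv g) (map g t) = t" for t using b by (simp add: bij_is_inj map_idI)
  have inj: "inj (map g)" by (metis ig injI)
  let ?Y = "map g ` X"
  have Y: "?Y \<subseteq> tuples d" using X by (auto simp: tuples_def)
  have cY: "map g ` (tuples d - X) = tuples d - ?Y"
  proof safe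
    fix t assume "t \<in> tuples d" "t \<notin> ?Y"
    then show "t \<in> map g ` (tuples d - X)" using gi
      by (metis (no_types, lifting) DiffI image_eqI length_map mem_Collect_eq tuples_def)
  qed (auto simp: tuples_def inj_image_mem_iff[OF inj] dest: injD[OF inj])
  obtain T0 where T0: "finite T0" "T0 \<subseteq> tuples d - X"
    "\<forall>T. finite T \<longrightarrow> T0 \<subseteq> T \<longrightarrow> T \<subseteq> tuples d - X \<longrightarrow> (tuples d - T \<in> Q \<longleftrightarrow> X \<in> Q)"
    using witness[OF Q X] by blast
  obtain T0' where T0': "finite T0'" "T0' \<subseteq> tuples d - ?Y"
    "\<forall>T. finite T \<longrightarrow> T0' \<subseteq> T \<longrightarrow> T \<subseteq> tuples d - ?Y \<longrightarrow> (tuples d - T \<in> Q \<longleftrightarrow> ?Y \<in> Q)"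
    using witness[OF Q Y] by blast
  define T1 where "T1 = T0 \<union> map (inv g) ` T0'"
  have f1: "finite T1" using T0 T0' by (simp add: T1_def)
  have s1: "T1 \<subseteq> tuples d - X"
  proof -
    have "map (inv g) ` T0' \<subseteq> map (inv g) ` (tuples d - ?Y)" using T0' by auto
    also have "\<dots> = tuples d - X" unfolding cY[symmetric] by (simp add: image_image inv_o_cancel[OF bij_is_inj[OF b]])
    finally show ?thesis using T0 by (auto simp: T1_def)
  qed
  have gT1: "map g ` T1 = map g ` T0 \<union> T0'" unfolding T1_def image_Un image_image gi by simp
  have "X \<in> Q \<longleftrightarrow> tuples d - T1 \<in> Q" using T0(3) f1 s1 by (auto simp: T1_def)
  also have "\<dots> \<longleftrightarrow> tuples d - map g ` T1 \<in> Q" using H f1 s1 by blast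
  also have "\<dots> \<longleftrightarrow> ?Y \<in> Q"
  proof -
    have "map g ` T1 \<subseteq> tuples d - ?Y" using s1 cY by blast
    moreover have "finite (map g ` T1)" using f1 by simp
    moreover have "T0' \<subseteq> map g ` T1" using gT1 by auto
    ultimately show ?thesis using T0'(3) by blast
  qed
  finally show "X \<in> Q \<longleftrightarrow> ?Y \<in> Q" .
qed




definition True0 :: form where "True0 = Ex 0 (Eq 0 0)"
lemma sat_True0[simp]: "sat d Q True0 \<sigma>" by (simp add: True0_def)
lemma fv_True0[simp]: "fv True0 = {}" by (simp add: True0_def)

definition tupeq :: "nat \<Rightarrow> nat list \<Rightarrow> form" where
  "tupeq m l = Conj (\<lambda>j. if j < length l then Eq (m+j) (l!j) else True0)"
definition avoid :: "nat \<Rightarrow> nat list list \<Rightarrow> form" where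
  "avoid m L = Conj (\<lambda>j. if j < length L then Neg (tupeq m (L!j)) else True0)"
definition psiT :: "nat \<Rightarrow> nat \<Rightarrow> nat list list \<Rightarrow> form" where
  "psiT d m L = Qf [m..<m+d] (avoid m L)"

lemma upds_upt: "length a = n \<Longrightarrow>
  upds \<sigma> [m..<m+n] a i = (if m \<le> i \<and> i < m+n then a!(i-m) else \<sigma> i)"
proof (induction a arbitrary: m \<sigma> n)
  case Nil then show ?case by simp
next
  case (Cons v a)
  then obtain n' where n: "n = Suc n'" "length a = n'" by auto
  have "[m..<m+n] = m # [Suc m..<Suc m + n']" using n by (simp add: upt_rec)
  then have "upds \<sigma> [m..<m+n] (v#a) i = upds (\<sigma>(m:=v)) [Suc m..<Suc m + n'] a i" by simp
  also have "\<dots> = (if Suc m \<le> i \<and> i < Suc m+n' then a!(i-Suc m) else (\<sigma>(m:=v)) i)"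
    using Cons.IH n by blast
  finally show ?case using n by (auto simp: nth_Cons')
qed

lemma sat_tupeq:
  assumes "length a = length l" "set l \<subseteq> {..<m}"
  shows "sat d Q (tupeq m l) (upds \<sigma> [m..<m+length a] a) \<longleftrightarrow> a = map \<sigma> l"
proof -
  have u1: "upds \<sigma> [m..<m+length a] a (m+j) = a!j" if "j < length a" for j
    using that by (simp add: upds_upt)
  have u2: "upds \<sigma> [m..<m+length a] a (l!j) = \<sigma> (l!j)" if "j < length a" for j
  proof -
    have "l!j \<in> set l" using that assms(1) by simp
    then have "l!j < m" using assms(2) by auto
    then show ?thesis by (simp add: upds_upt)
  qed
  have "sat d Q (tupeq m l) (upds \<sigma> [m..<m+length a] a) \<longleftrightarrow> (\<forall>j<length l. a!j = \<sigma> (l!j))"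
    using u1 u2 assms(1) by (auto simp: tupeq_def)
  also have "\<dots> \<longleftrightarrow> a = map \<sigma> l" using assms(1) by (auto simp: list_eq_iff_nth_eq)
  finally show ?thesis .
qed

lemma sat_psiT:
  assumes "\<forall>l\<in>set L. length l = d \<and> set l \<subseteq> {..<m}"
  shows "sat d Q (psiT d m L) \<sigma> \<longleftrightarrow> tuples d - map \<sigma> ` set L \<in> Q"
proof -
  have "{a \<in> tuples d. sat d Q (avoid m L) (upds \<sigma> [m..<m+d] a)} = tuples d - map \<sigma> ` set L"
  proof -
    { fix a assume a: "a \<in> tuples d"
      then have la: "length a = d" by (simp add: tuples_def)
      have "sat d Q (avoid m L) (upds \<sigma> [m..<m+d] a) \<longleftrightarrow>
          (\<forall>j<length L. \<not> sat d Q (tupeq m (L!j)) (upds \<sigma> [m..<m+d] a))"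
        by (auto simp: avoid_def)
      also have "\<dots> \<longleftrightarrow> (\<forall>j<length L. a \<noteq> map \<sigma> (L!j))"
        using sat_tupeq[of a "L!_" m d Q \<sigma>] assms la by (metis nth_mem)
      also have "\<dots> \<longleftrightarrow> a \<notin> map \<sigma> ` set L" by (auto simp: in_set_conv_nth) (metis image_eqI nth_mem)
      finally have "sat d Q (avoid m L) (upds \<sigma> [m..<m+d] a) \<longleftrightarrow> a \<notin> map \<sigma> ` set L" . }
    then show ?thesis by auto
  qed
  then show ?thesis by (simp add: psiT_def)
qed

lemma fv_psiT:
  assumes "\<forall>l\<in>set L. length l = d \<and> set l \<subseteq> {..<m}"
  shows "fv (psiT d m L) \<subseteq> {..<m}"
proof -
  have tq: "fv (tupeq m l) \<subseteq> {m..<m+d} \<union> {..<m}" if "l \<in> set L" for l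
  proof -
    have "l!j < m" if "j < length l" for j
    proof -
      have "l!j \<in> set l" using that by simp
      then show ?thesis using assms \<open>l \<in> set L\<close> by auto
    qed
    then show ?thesis using assms that by (auto simp: tupeq_def split: if_splits)
  qed
  have "fv (avoid m L) \<subseteq> {m..<m+d} \<union> {..<m}"
  proof
    fix x assume "x \<in> fv (avoid m L)"
    then obtain j where "j < length L" "x \<in> fv (tupeq m (L!j))"
      by (auto simp: avoid_def split: if_splits)
    moreover have "L!j \<in> set L" using \<open>j < length L\<close> by simp
    ultimately show "x \<in> {m..<m+d} \<union> {..<m}" using tq by blast
  qed
  then show ?thesis by (auto simp: psiT_def)
qed




definition env :: "nat list \<Rightarrow> nat \<Rightarrow> nat" where
  "env l i = (if i < length l then l!i else 0)"

definition teq :: "nat \<Rightarrow> nat list set set \<Rightarrow> nat list \<Rightarrow> nat list \<Rightarrow> bool" where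
  "teq d Q x y \<longleftrightarrow> length x = length y \<and>
     (\<forall>\<phi>. fv \<phi> \<subseteq> {..<length x} \<longrightarrow> sat d Q \<phi> (env x) = sat d Q \<phi> (env y))"

lemma teq_sym: "teq d Q x y \<Longrightarrow> teq d Q y x" by (auto simp: teq_def)

lemma env_snoc: "i < Suc (length x) \<Longrightarrow> ((env x)(length x := c)) i = env (x@[c]) i"
  by (auto simp: env_def nth_append)

lemma teq_ext:
  assumes t: "teq d Q x y"
  shows "\<exists>e. teq d Q (x@[c]) (y@[e])"
proof (rule ccontr)
  assume H: "\<not> ?thesis"
  let ?k = "length x"
  have ly: "length y = ?k" using t by (simp add: teq_def)
  have "\<exists>\<phi>. fv \<phi> \<subseteq> {..<Suc ?k} \<and> sat d Q \<phi> (env (x@[c])) \<and> \<not> sat d Q \<phi> (env (y@[e]))" for e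
  proof -
    from H obtain \<phi> where \<phi>: "fv \<phi> \<subseteq> {..<Suc ?k}"
        "sat d Q \<phi> (env (x@[c])) \<noteq> sat d Q \<phi> (env (y@[e]))"
      using ly by (auto simp: teq_def)
    show ?thesis
    proof (cases "sat d Q \<phi> (env (x@[c]))")
      case True then show ?thesis using \<phi> by blast
    next
      case False then show ?thesis using \<phi> by (intro exI[of _ "Neg \<phi>"]) auto
    qed
  qed
  then obtain F where F: "\<And>e. fv (F e) \<subseteq> {..<Suc ?k}" "\<And>e. sat d Q (F e) (env (x@[c]))"
    "\<And>e. \<not> sat d Q (F e) (env (y@[e]))" by metis
  let ?\<Psi> = "Ex ?k (Conj F)"
  have fv: "fv ?\<Psi> \<subseteq> {..<?k}" using F(1) by fastforce
  have "sat d Q (F e) ((env x)(?k := c))" for e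
    using F(2)[of e] coinc[of "F e" "(env x)(?k := c)" "env (x@[c])"] F(1)[of e] env_snoc[of _ x c]
    by (metis lessThan_iff subsetD)
  then have "sat d Q ?\<Psi> (env x)" by auto
  moreover have "sat d Q ?\<Psi> (env x) = sat d Q ?\<Psi> (env y)" using t fv unfolding teq_def by blast
  ultimately have "sat d Q ?\<Psi> (env y)" by blast
  then obtain v where "\<forall>e. sat d Q (F e) ((env y)(?k := v))" by auto
  then have "sat d Q (F v) ((env y)(length y := v))" using ly by simp
  then have "sat d Q (F v) (env (y@[v]))"
    using coinc[of "F v" "(env y)(length y := v)" "env (y@[v])"] F(1)[of v] env_snoc[of _ y v] ly
    by (metis lessThan_iff subsetD)
  then show False using F(3) by blast
qed

lemma teq_back: "teq d Q x y \<Longrightarrow> \<exists>c. teq d Q (x@[c]) (y@[e])"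
  using teq_ext[OF teq_sym] teq_sym by blast

primrec bf :: "nat \<Rightarrow> nat list set set \<Rightarrow> nat list \<Rightarrow> nat list \<Rightarrow> nat \<Rightarrow> nat list \<times> nat list" where
  "bf d Q a0 b0 0 = (a0, b0)"
| "bf d Q a0 b0 (Suc n) = (let x = fst (bf d Q a0 b0 n); y = snd (bf d Q a0 b0 n);
    e = (SOME e. teq d Q (x@[n]) (y@[e]));
    c = (SOME c. teq d Q (x@[n,c]) (y@[e,n]))
   in (x@[n,c], y@[e,n]))"

declare bf.simps(2)[simp del]

context
  fixes d Q a0 b0
  assumes t0: "teq d Q a0 b0"
begin

abbreviation "xs n \<equiv> fst (bf d Q a0 b0 n)"
abbreviation "ys n \<equiv> snd (bf d Q a0 b0 n)"

lemma bf_inv: "teq d Q (xs n) (ys n) \<and> length (xs n) = length a0 + 2*n"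
proof (induction n)
  case 0 then show ?case using t0 by simp
next
  case (Suc n)
  let ?x = "xs n" and ?y = "ys n"
  define e where "e = (SOME e. teq d Q (?x@[n]) (?y@[e]))"
  have te: "teq d Q (?x@[n]) (?y@[e])"
    unfolding e_def by (rule someI_ex) (use teq_ext Suc in blast)
  define c where "c = (SOME c. teq d Q (?x@[n,c]) (?y@[e,n]))"
  have tc: "teq d Q (?x@[n,c]) (?y@[e,n])"
    unfolding c_def by (rule someI_ex) (use teq_back[OF te, of n] in simp)
  have "bf d Q a0 b0 (Suc n) = (?x@[n,c], ?y@[e,n])"
    by (simp add: Let_def e_def c_def bf.simps(2))
  then show ?case using tc Suc by simp
qed

lemma bf_shape: "\<exists>c e::nat. xs (Suc n) = xs n @ [n,c] \<and> ys (Suc n) = ys n @ [e,n]"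
  by (simp add: Let_def bf.simps(2))

lemma len_xs: "length (xs n) = length a0 + 2*n" using bf_inv by blast
lemma len_ys: "length (ys n) = length a0 + 2*n" using bf_inv by (metis teq_def)

lemma xs_prefix: "n \<le> m \<Longrightarrow> i < length (xs n) \<Longrightarrow> xs m ! i = xs n ! i"
proof (induction m rule: dec_induct)
  case (step m)
  obtain c e where "xs (Suc m) = xs m @ [m,c]" using bf_shape by blast
  moreover have "i < length (xs m)" using step len_xs by (metis add_le_cancel_left mult_le_mono2 order_less_le_trans)
  ultimately show ?case using step by (simp add: nth_append)
qed simp

lemma ys_prefix: "n \<le> m \<Longrightarrow> i < length (ys n) \<Longrightarrow> ys m ! i = ys n ! i"
proof (induction m rule: dec_induct)
  case (step m)
  obtain c e where "ys (Suc m) = ys m @ [e,m]" using bf_shape by blast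
  moreover have "i < length (ys m)" using step len_ys by (metis add_le_cancel_left mult_le_mono2 order_less_le_trans)
  ultimately show ?case using step by (simp add: nth_append)
qed simp

definition "X i = xs (Suc i) ! i"
definition "Y i = ys (Suc i) ! i"

lemma Xn: "i < length a0 + 2*n \<Longrightarrow> xs n ! i = X i"
proof -
  assume i: "i < length a0 + 2*n"
  let ?M = "max n (Suc i)"
  have "xs ?M ! i = xs n ! i" using xs_prefix[of n ?M i] i len_xs by simp
  moreover have "xs ?M ! i = xs (Suc i) ! i" using xs_prefix[of "Suc i" ?M i] len_xs by simp
  ultimately show ?thesis by (simp add: X_def)
qed

lemma Yn: "i < length a0 + 2*n \<Longrightarrow> ys n ! i = Y i"
proof -
  assume i: "i < length a0 + 2*n"
  let ?M = "max n (Suc i)"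
  have "ys ?M ! i = ys n ! i" using ys_prefix[of n ?M i] i len_ys by simp
  moreover have "ys ?M ! i = ys (Suc i) ! i" using ys_prefix[of "Suc i" ?M i] len_ys by simp
  ultimately show ?thesis by (simp add: Y_def)
qed

lemma Xc: "X (length a0 + 2*c) = c"
proof -
  obtain c' e where "xs (Suc c) = xs c @ [c,c']" using bf_shape by blast
  then have "xs (Suc c) ! (length a0 + 2*c) = c" using len_xs[of c] by (simp add: nth_append)
  then show ?thesis using Xn[of "length a0 + 2*c" "Suc c"] by simp
qed

lemma Ye: "Y (length a0 + 2*e + 1) = e"
proof -
  obtain c' e' where "ys (Suc e) = ys e @ [e',e]" using bf_shape by blast
  then have "ys (Suc e) ! (length a0 + 2*e + 1) = e" using len_ys[of e] by (simp add: nth_append)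
  then show ?thesis using Yn[of "length a0 + 2*e + 1" "Suc e"] by simp
qed

lemma XY: "X i = X j \<longleftrightarrow> Y i = Y j"
proof -
  let ?n = "Suc (max i j)"
  have ij: "i < length a0 + 2*?n" "j < length a0 + 2*?n" by auto
  have fvs: "fv (Eq i j) \<subseteq> {..<length (xs ?n)}" using ij len_xs by auto
  have "sat d Q (Eq i j) (env (xs ?n)) = sat d Q (Eq i j) (env (ys ?n))"
    using bf_inv[of ?n] fvs unfolding teq_def by blast
  then have "(xs ?n ! i = xs ?n ! j) = (ys ?n ! i = ys ?n ! j)"
    using ij len_xs len_ys by (simp add: env_def)
  then show ?thesis using Xn[OF ij(1)] Xn[OF ij(2)] Yn[OF ij(1)] Yn[OF ij(2)] by simp
qed

definition "gg c = Y (SOME i. X i = c)"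

lemma gg_X: "gg (X i) = Y i"
proof -
  have "X (SOME j. X j = X i) = X i" by (rule someI) (rule refl)
  then show ?thesis unfolding gg_def using XY by blast
qed

lemma bij_gg: "bij gg"
proof (rule bijI)
  show "inj gg"
  proof (rule injI)
    fix c1 c2 assume "gg c1 = gg c2"
    then show "c1 = c2" using gg_X[of "length a0 + 2*c1"] gg_X[of "length a0 + 2*c2"] Xc XY by metis
  qed
  show "surj gg"
  proof (rule surjI)
    fix e show "gg (X (length a0 + 2*e + 1)) = e" using gg_X Ye by simp
  qed
qed

lemma gg_aut:
  assumes Q: "Q \<in> boolcomb d"
  shows "gg \<in> Aut d Q"
proof (rule aut_finite[OF Q bij_gg], intro allI impI)
  fix T assume T: "finite T" "T \<subseteq> tuples d"
  have fin: "finite (\<Union>(set ` T))" by (rule finite_Union) (use T in auto)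
  obtain n where n: "\<forall>c\<in>\<Union>(set ` T). c < n"
    using finite_nat_set_iff_bounded[THEN iffD1, OF fin] by blast
  let ?x = "xs n" and ?y = "ys n"
  let ?m = "length a0 + 2*n"
  let ?p = "\<lambda>c. length a0 + 2*c"
  have "finite (map ?p ` T)" using T by simp
  from finite_list[OF this] obtain L where L: "set L = map ?p ` T" by blast
  have cn: "c < n" if "t \<in> T" "c \<in> set t" for t c using n that by blast
  have Lok: "\<forall>l\<in>set L. length l = d \<and> set l \<subseteq> {..<?m}"
  proof
    fix l assume "l \<in> set L"
    then obtain t where t: "t \<in> T" "l = map ?p t" using L by auto
    have "length t = d" using t T by (auto simp: tuples_def)
    moreover have "set l \<subseteq> {..<?m}" using cn[OF t(1)] t(2) by auto
    ultimately show "length l = d \<and> set l \<subseteq> {..<?m}" using t by simp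
  qed
  have ex: "map (env ?x) (map ?p t) = t" if "t \<in> T" for t
  proof -
    have "env ?x (?p c) = c" if "c \<in> set t" for c
      using cn[OF \<open>t \<in> T\<close> that] Xn[of "?p c" n] Xc len_xs by (simp add: env_def)
    then show ?thesis by (simp add: map_idI)
  qed
  have ey: "map (env ?y) (map ?p t) = map gg t" if "t \<in> T" for t
  proof -
    have "env ?y (?p c) = gg c" if "c \<in> set t" for c
      using cn[OF \<open>t \<in> T\<close> that] Yn[of "?p c" n] gg_X[of "?p c"] Xc len_ys by (simp add: env_def)
    then show ?thesis by simp
  qed
  have "map (env ?x) ` set L = T" unfolding L image_image using ex by simp
  moreover have "map (env ?y) ` set L = map gg ` T"
    unfolding L image_image by (rule image_cong[OF refl ey])
  moreover have "sat d Q (psiT d ?m L) (env ?x) = sat d Q (psiT d ?m L) (env ?y)"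
  proof -
    have "fv (psiT d ?m L) \<subseteq> {..<length ?x}" using fv_psiT[OF Lok] len_xs by simp
    then show ?thesis using bf_inv[of n] unfolding teq_def by blast
  qed
  ultimately show "tuples d - T \<in> Q \<longleftrightarrow> tuples d - map gg ` T \<in> Q"
    using sat_psiT[OF Lok] by metis
qed

lemma gg_map: "map gg a0 = b0"
proof -
  have l: "length b0 = length a0" using t0 by (simp add: teq_def)
  have "gg (a0!i) = b0!i" if "i < length a0" for i
    using Xn[of i 0] Yn[of i 0] gg_X[of i] that by simp
  then show ?thesis using l by (simp add: list_eq_iff_nth_eq)
qed

end

lemma teq_orbit:
  assumes "Q \<in> boolcomb d" "teq d Q a0 b0"
  shows "\<exists>g\<in>Aut d Q. map g a0 = b0"
  using gg_aut[OF assms(2,1)] gg_map[OF assms(2)] by blast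

lemma aut_teq:
  assumes "g \<in> Aut d Q"
  shows "teq d Q a0 (map g a0)"
  unfolding teq_def
proof (intro conjI allI impI)
  fix \<phi> assume fv: "fv \<phi> \<subseteq> {..<length a0}"
  have "sat d Q \<phi> (env (map g a0)) = sat d Q \<phi> (g \<circ> env a0)"
    by (rule coinc) (use fv in \<open>auto simp: env_def\<close>)
  also have "\<dots> = sat d Q \<phi> (env a0)" by (rule sat_aut[OF assms])
  finally show "sat d Q \<phi> (env a0) = sat d Q \<phi> (env (map g a0))" by simp
qed simp




theorem proposition22:
  fixes d :: nat and Q :: "nat list set set" and a :: "nat list list"
  assumes "Q \<in> boolcomb d"
    and "\<forall>t \<in> set a. t \<in> tuples d"
  shows "definable d Q (length a * d) (concat ` orbit d Q a)"
proof -
  let ?k = "length a * d"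
  let ?a0 = "concat a"
  let ?O = "concat ` orbit d Q a"
  have la0: "length ?a0 = ?k"
    using assms(2) by (induction a) (auto simp: tuples_def)
  have O: "?O = {map g ?a0 | g. g \<in> Aut d Q}"
    by (auto simp: orbit_def map_concat)
  have Osub: "?O \<subseteq> tuples ?k" using O la0 by (auto simp: tuples_def)
  have spec: "\<exists>\<phi>. fv \<phi> \<subseteq> {..<?k} \<and> sat d Q \<phi> (env ?a0) \<and> \<not> sat d Q \<phi> (env b)"
    if lb: "length b = ?k" and nb: "b \<notin> ?O" for b
  proof -
    have "\<not> teq d Q ?a0 b"
    proof
      assume "teq d Q ?a0 b"
      then obtain g where "g \<in> Aut d Q" "map g ?a0 = b" using teq_orbit[OF assms(1)] by blast
      then show False using nb O by auto
    qed
    then obtain \<phi> where \<phi>: "fv \<phi> \<subseteq> {..<?k}" "sat d Q \<phi> (env ?a0) \<noteq> sat d Q \<phi> (env b)"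
      using lb la0 unfolding teq_def by auto
    show ?thesis
    proof (cases "sat d Q \<phi> (env ?a0)")
      case True then show ?thesis using \<phi> by blast
    next
      case False then show ?thesis using \<phi> by (intro exI[of _ "Neg \<phi>"]) auto
    qed
  qed
  define F where "F n = (let b = (from_nat n :: nat list) in
     if length b = ?k \<and> b \<notin> ?O
     then (SOME \<phi>. fv \<phi> \<subseteq> {..<?k} \<and> sat d Q \<phi> (env ?a0) \<and> \<not> sat d Q \<phi> (env b))
     else True0)" for n
  have Fgood: "fv (F n) \<subseteq> {..<?k} \<and> sat d Q (F n) (env ?a0) \<and>
      (length (from_nat n :: nat list) = ?k \<and> (from_nat n :: nat list) \<notin> ?O \<longrightarrow>
        \<not> sat d Q (F n) (env (from_nat n)))" for n
  proof (cases "length (from_nat n :: nat list) = ?k \<and> (from_nat n :: nat list) \<notin> ?O")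
    case True
    then show ?thesis unfolding F_def Let_def
      using someI_ex[OF spec[of "from_nat n"]] by simp
  next
    case False
    then show ?thesis unfolding F_def Let_def by auto
  qed
  let ?\<Phi> = "Conj F"
  have fv: "fv ?\<Phi> \<subseteq> {..<?k}" using Fgood by auto
  have "sat d Q ?\<Phi> \<sigma> \<longleftrightarrow> map \<sigma> [0..<?k] \<in> ?O" for \<sigma>
  proof -
    let ?s = "map \<sigma> [0..<?k]"
    have "sat d Q ?\<Phi> \<sigma> = sat d Q ?\<Phi> (env ?s)"
      by (rule coinc) (use fv in \<open>auto simp: env_def\<close>)
    also have "\<dots> \<longleftrightarrow> ?s \<in> ?O"
    proof
      assume H: "sat d Q ?\<Phi> (env ?s)"
      show "?s \<in> ?O"
      proof (rule ccontr)
        assume "?s \<notin> ?O"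
        then have "\<not> sat d Q (F (to_nat ?s)) (env ?s)" using Fgood[of "to_nat ?s"] by simp
        then show False using H by simp
      qed
    next
      assume "?s \<in> ?O"
      then obtain g where g: "g \<in> Aut d Q" "?s = map g ?a0" using O by auto
      have t: "teq d Q ?a0 ?s" using aut_teq[OF g(1)] g(2) by simp
      have "sat d Q (F n) (env ?s)" for n
        using t Fgood[of n] la0 unfolding teq_def by metis
      then show "sat d Q ?\<Phi> (env ?s)" by simp
    qed
    finally show ?thesis .
  qed
  then show ?thesis unfolding definable_def using Osub fv by blast
qed


end
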